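(* Let $k\ge 2$ be an integer, $0<\bar r\le k$ a residue, and $\mathcal{A}$ the alphabet of all positive integers congruent to $\bar r \pmod k$. If for all $n\ge 1$ we have $\mathfrak{D}_{\mathcal{A}} \bmod k^n=\mathbb{Z}/k^n\mathbb{Z}$, then $\mathcal{A}$ has no local obstructions.
   Context: For $a\in\mathbb{N}$ let $\gamma_a=\begin{pmatrix}0&1\\1&a\end{pmatrix}$ and let $\mathcal{G}_{\mathcal{A}}$ be the semigroup generated by $\gamma_a$, $a\in\mathcal{A}$ (products of one or more generators). $\mathfrak{D}_{\mathcal{A}}=\{\langle \gamma e_2,e_2\rangle:\gamma\in\mathcal{G}_{\mathcal{A}}\}$ is the set of lower-right entries of elements of $\mathcal{G}_{\mathcal{A}}$. An integer $d$ is admissible if for every $q\in\mathbb{N}$, $d \bmod q$ lies in $\mathfrak{D}_{\mathcal{A}}\bmod q$; $\mathcal{A}$ has no local obstructions if every integer is admissible. *)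

theory Defs
  imports "Jordan_Normal_Form.Matrix" "HOL-Number_Theory.Cong"
begin

definition gamma :: "nat \<Rightarrow> int mat" where
  "gamma a = mat_of_rows_list 2 [[0, 1], [1, int a]]"

inductive_set semigrp :: "nat set \<Rightarrow> int mat set" for A :: "nat set" where
  gen: "a \<in> A \<Longrightarrow> gamma a \<in> semigrp A"
| step: "g \<in> semigrp A \<Longrightarrow> a \<in> A \<Longrightarrow> g * gamma a \<in> semigrp A"

text \<open>Lower-right entries <gamma e2, e2>.\<close>
definition Dset :: "nat set \<Rightarrow> int set" where
  "Dset A = {g $$ (1, 1) | g. g \<in> semigrp A}"

definition admissible :: "nat set \<Rightarrow> int \<Rightarrow> bool" where
  "admissible A d \<longleftrightarrow> (\<forall>q::nat. q > 0 \<longrightarrow> (\<exists>x \<in> Dset A. [x = d] (mod int q)))"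

definition no_local_obstructions :: "nat set \<Rightarrow> bool" where
  "no_local_obstructions A \<longleftrightarrow> (\<forall>d::int. admissible A d)"

end

theory Submission imports Defs begin

definition tomat :: "int \<times> int \<times> int \<times> int \<Rightarrow> int mat" where
  "tomat T = (case T of (p,q,s,t) \<Rightarrow> mat_of_rows_list 2 [[p, q], [s, t]])"

fun stepT :: "int \<times> int \<times> int \<times> int \<Rightarrow> nat \<Rightarrow> int \<times> int \<times> int \<times> int" where
  "stepT (p,q,s,t) a = (q, p + int a * q, t, s + int a * t)"

lemma tomat_idx: "tomat (p,q,s,t) $$ (1,1) = t"
  by (simp add: tomat_def mat_of_rows_list_def)

lemma tomat_step: "tomat T * gamma a = tomat (stepT T a)"
proof -
  obtain p q s t where T: "T = (p,q,s,t)" by (cases T) auto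
  show ?thesis unfolding T
    apply (rule eq_matI)
    apply (auto simp: tomat_def gamma_def mat_of_rows_list_def scalar_prod_def less_2_cases_iff)
    apply (auto simp: less_Suc_eq algebra_simps)
    done
qed

lemma gamma_tomat: "gamma a = tomat (stepT (1,0,0,1) a)"
  by (rule eq_matI) (auto simp: tomat_def gamma_def mat_of_rows_list_def less_2_cases_iff)

abbreviation "I4 \<equiv> ((1::int),(0::int),(0::int),(1::int))"

lemma semigrp_list:
  assumes "g \<in> semigrp A"
  shows "\<exists>bs. bs \<noteq> [] \<and> set bs \<subseteq> A \<and> g = tomat (foldl stepT I4 bs)"
  using assms
proof induction
  case (gen a) then show ?case by (intro exI[of _ "[a]"]) (simp add: gamma_tomat)
next
  case (step g a)
  then obtain bs where "bs \<noteq> []" "set bs \<subseteq> A" "g = tomat (foldl stepT I4 bs)" by blast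
  with step show ?case by (intro exI[of _ "bs @ [a]"]) (simp add: tomat_step)
qed

lemma list_semigrp:
  assumes "bs \<noteq> []" "set bs \<subseteq> A"
  shows "tomat (foldl stepT I4 bs) \<in> semigrp A"
  using assms
proof (induction bs rule: rev_induct)
  case Nil then show ?case by simp
next
  case (snoc b xs)
  show ?case
  proof (cases "xs = []")
    case True
    then show ?thesis using snoc semigrp.gen[of b A] by (simp add: gamma_tomat)
  next
    case False
    then have "tomat (foldl stepT I4 xs) \<in> semigrp A" using snoc by simp
    then have "tomat (foldl stepT I4 xs) * gamma b \<in> semigrp A" using snoc by (simp add: semigrp.step)
    then show ?thesis by (simp add: tomat_step)
  qed
qed

definition cong4 :: "int \<Rightarrow> int \<times> int \<times> int \<times> int \<Rightarrow> int \<times> int \<times> int \<times> int \<Rightarrow> bool" where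
  "cong4 M T U = (case T of (p,q,s,t) \<Rightarrow> case U of (p',q',s',t') \<Rightarrow>
     [p = p'] (mod M) \<and> [q = q'] (mod M) \<and> [s = s'] (mod M) \<and> [t = t'] (mod M))"

lemma cong4_step:
  assumes "cong4 M T U" "[int a = int b] (mod M)"
  shows "cong4 M (stepT T a) (stepT U b)"
proof -
  obtain p q s t where T: "T = (p,q,s,t)" by (cases T) auto
  obtain p' q' s' t' where U: "U = (p',q',s',t')" by (cases U) auto
  show ?thesis using assms unfolding T U cong4_def
    by (simp add: cong_add cong_mult)
qed

lemma cong4_fold:
  assumes "cong4 M T U" "list_all2 (\<lambda>a b. [int a = int b] (mod M)) as bs"
  shows "cong4 M (foldl stepT T as) (foldl stepT U bs)"
  using assms(2,1)
  by (induction as bs arbitrary: T U rule: list_all2_induct) (auto simp: cong4_step)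

lemma fold_zeros: "foldl stepT I4 (replicate j 0) = (if even j then I4 else (0,1,1,0))"
proof (induction j)
  case 0 then show ?case by simp
next
  case (Suc j)
  have "replicate (Suc j) (0::nat) = replicate j 0 @ [0]" by (simp add: replicate_append_same)
  then show ?case using Suc by simp
qed

lemma mod_cong_nat:
  fixes d :: int and Q :: nat
  assumes "Q > 0"
  shows "[int (nat (d mod int Q)) = d] (mod int Q)"
proof -
  have "int (nat (d mod int Q)) = d mod int Q" using assms by simp
  then show ?thesis by (simp add: cong_def)
qed

lemma target:
  fixes m :: nat and Q :: nat and d :: int
  assumes "m \<ge> 1" "Q > 0"
  shows "\<exists>cs. length cs = m \<and> [snd (snd (snd (foldl stepT I4 cs))) = d] (mod int Q)"
proof (cases "m = 1")
  case True
  define y where "y = nat (d mod int Q)"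
  have "[int y = d] (mod int Q)" using assms mod_cong_nat unfolding y_def by blast
  moreover have "foldl stepT I4 [y] = (0,1,1,int y)" by simp
  ultimately show ?thesis using True by (intro exI[of _ "[y]"]) simp
next
  case False
  define j where "j = m - 2"
  have m: "m = j + 2" using False assms unfolding j_def by simp
  have fz: "foldl stepT I4 (replicate j 0 @ [1, y]) = foldl stepT (if even j then I4 else (0,1,1,0)) [1,y]" for y
    by (simp only: foldl_append fold_zeros)
  show ?thesis
  proof (cases "even j")
    case True
    define y where "y = nat ((d - 1) mod int Q)"
    have "[int y = d - 1] (mod int Q)" using assms mod_cong_nat unfolding y_def by blast
    then have "[1 + int y = 1 + (d - 1)] (mod int Q)" by (rule cong_add[OF cong_refl])
    then have c: "[1 + int y = d] (mod int Q)" by simp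
    have "foldl stepT I4 (replicate j 0 @ [1, y]) = (1, int y, 1, 1 + int y)"
      using fz[of y] True by simp
    then show ?thesis using m c
      by (intro exI[of _ "replicate j 0 @ [1, y]"]) simp
  next
    case False
    define y where "y = nat (d mod int Q)"
    have c: "[int y = d] (mod int Q)" using assms mod_cong_nat unfolding y_def by blast
    have "foldl stepT I4 (replicate j 0 @ [1, y]) = (1, 1 + int y, 1, int y)"
      using fz[of y] False by simp
    then show ?thesis using m c
      by (intro exI[of _ "replicate j 0 @ [1, y]"]) simp
  qed
qed

lemma split_mod:
  fixes q k :: nat
  assumes "q > 0"
  shows "\<exists>q1 q2. q = q1 * q2 \<and> coprime q2 k \<and> q1 dvd k ^ q"
  using assms
proof (induction q rule: less_induct)
  case (less q)
  show ?case
  proof (cases "coprime q k")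
    case True
    then show ?thesis by (intro exI[of _ 1] exI[of _ q]) simp
  next
    case False
    then obtain c where c: "c dvd q" "c dvd k" "\<not> is_unit c" by (rule not_coprimeE)
    then obtain q' where q': "q = c * q'" by (auto elim: dvdE)
    have "c \<noteq> 1" using c by auto
    moreover have "c \<noteq> 0" using q' less.prems by auto
    ultimately have c2: "c \<ge> 2" by linarith
    have q'pos: "q' > 0" using q' less.prems by (cases "q' = 0") auto
    have "q' < q" using q' c2 q'pos by (simp add: less_le_trans[of q' "2*q'"])
    then obtain q1 q2 where h: "q' = q1 * q2" "coprime q2 k" "q1 dvd k ^ q'"
      using less.IH q'pos by blast
    have "Suc q' \<le> q" using \<open>q' < q\<close> by simp
    then have "k ^ Suc q' dvd k ^ q" by (rule le_imp_power_dvd)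
    moreover have "c * q1 dvd k ^ Suc q'" using c(2) h(3) by (simp add: mult_dvd_mono)
    ultimately have "c * q1 dvd k ^ q" by (rule dvd_trans[rotated])
    then show ?thesis using h q' by (intro exI[of _ "c * q1"] exI[of _ q2]) (simp add: ac_simps)
  qed
qed

lemma cong4_last: "cong4 M T U \<Longrightarrow> [snd (snd (snd T)) = snd (snd (snd U))] (mod M)"
  by (cases T, cases U) (simp add: cong4_def)

lemma tomat_val: "tomat T $$ (1,1) = snd (snd (snd T))"
  by (cases T) (simp add: tomat_def mat_of_rows_list_def)

theorem lemmaB8:
  fixes k r :: nat
  assumes "k \<ge> 2" and "0 < r" and "r \<le> k"
    and "\<forall>n::nat. n \<ge> 1 \<longrightarrow> (\<forall>d::int. \<exists>x \<in> Dset {a. a > 0 \<and> [a = r] (mod k)}. [x = d] (mod int (k ^ n)))"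
  shows "no_local_obstructions {a. a > 0 \<and> [a = r] (mod k)}"
  unfolding no_local_obstructions_def admissible_def
proof (intro allI impI)
  fix d :: int and q :: nat
  assume qpos: "q > 0"
  define A where "A = {a. a > 0 \<and> [a = r] (mod k)}"
  obtain q1 q2 where qs: "q = q1 * q2" "coprime q2 k" "q1 dvd k ^ q"
    using split_mod[OF qpos] by blast
  define n where "n = Suc q"
  have q2pos: "q2 > 0" using qs qpos by (cases "q2 = 0") auto
  have q1n: "q1 dvd k ^ n" using qs(3) unfolding n_def by (meson dvd_trans le_imp_power_dvd le_SucI order_refl)
  have kn: "k dvd k ^ n" unfolding n_def by simp
  have cop: "coprime (k ^ n) q2" using qs(2) by (simp add: ac_simps)
  have cop12: "coprime q1 q2" using coprime_divisors[OF q1n dvd_refl cop] .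
  obtain x where x: "x \<in> Dset A" "[x = d] (mod int (k ^ n))"
    using assms(4)[rule_format, of n d] unfolding A_def n_def by auto
  then obtain g where g: "g \<in> semigrp A" "x = g $$ (1,1)" unfolding Dset_def by auto
  then obtain bs where bs: "bs \<noteq> []" "set bs \<subseteq> A" "g = tomat (foldl stepT I4 bs)"
    using semigrp_list by blast
  have xv: "x = snd (snd (snd (foldl stepT I4 bs)))" unfolding g(2) bs(3) by (rule tomat_val)
  have lb: "length bs \<ge> 1" using bs(1) by (cases bs) auto
  obtain cs where cs: "length cs = length bs" "[snd (snd (snd (foldl stepT I4 cs))) = d] (mod int q2)"
    using target[of "length bs" q2 d] q2pos lb by blast
  define P where "P i y = (y > 0 \<and> [y = bs ! i] (mod k ^ n) \<and> [y = cs ! i] (mod q2))" for i y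
  have exP: "\<exists>y. P i y" for i
  proof -
    obtain y where y: "[y = bs ! i] (mod k ^ n)" "[y = cs ! i] (mod q2)"
      using binary_chinese_remainder_nat[OF cop] by blast
    have h1: "[y + k ^ n * q2 = y] (mod k ^ n)" by (simp add: cong_def)
    have h2: "[y + k ^ n * q2 = y] (mod q2)" by (simp add: cong_def)
    have h3: "y + k ^ n * q2 > 0" using q2pos assms(1) by simp
    show ?thesis unfolding P_def using h3 cong_trans[OF h1 y(1)] cong_trans[OF h2 y(2)] by blast
  qed
  define es where "es = map (\<lambda>i. SOME y. P i y) [0..<length bs]"
  have Pes: "P i (es ! i)" if "i < length bs" for i
    using that someI_ex[OF exP[of i]] unfolding es_def by simp
  have les: "length es = length bs" unfolding es_def by simp
  have esA: "set es \<subseteq> A"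
  proof
    fix y assume "y \<in> set es"
    then obtain i where i: "i < length bs" "y = es ! i" using les by (auto simp: in_set_conv_nth)
    have "bs ! i \<in> A" using bs(2) i(1) by auto
    then have "[bs ! i = r] (mod k)" unfolding A_def by simp
    moreover have "[y = bs ! i] (mod k ^ n)" using Pes[OF i(1)] i(2) unfolding P_def by simp
    then have "[y = bs ! i] (mod k)" unfolding cong_def by (metis mod_mod_cancel[OF kn])
    moreover have "y > 0" using Pes[OF i(1)] i(2) unfolding P_def by simp
    ultimately show "y \<in> A" unfolding A_def using cong_trans by blast
  qed
  have I4c: "cong4 M I4 I4" for M unfolding cong4_def by simp
  have l1: "list_all2 (\<lambda>a b. [int a = int b] (mod int (k ^ n))) es bs"
    using Pes les unfolding P_def by (auto simp: list_all2_conv_all_nth cong_int_iff simp del: of_nat_power)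
  have l2: "list_all2 (\<lambda>a b. [int a = int b] (mod int q2)) es cs"
    using Pes les cs(1) unfolding P_def by (auto simp: list_all2_conv_all_nth cong_int_iff)
  define v where "v = snd (snd (snd (foldl stepT I4 es)))"
  have "cong4 (int (k ^ n)) (foldl stepT I4 es) (foldl stepT I4 bs)"
    by (rule cong4_fold[OF I4c l1])
  then have "[v = x] (mod int (k ^ n))" unfolding v_def xv by (rule cong4_last)
  then have "[v = d] (mod int (k ^ n))" using x(2) by (rule cong_trans)
  moreover have "int q1 dvd int (k ^ n)" using q1n by (simp only: of_nat_dvd_iff)
  ultimately have c1: "[v = d] (mod int q1)" by (rule cong_dvd_modulus)
  have "cong4 (int q2) (foldl stepT I4 es) (foldl stepT I4 cs)"
    by (rule cong4_fold[OF I4c l2])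
  then have "[v = snd (snd (snd (foldl stepT I4 cs)))] (mod int q2)" unfolding v_def by (rule cong4_last)
  then have c2: "[v = d] (mod int q2)" using cs(2) by (rule cong_trans)
  have "[v = d] (mod int q1 * int q2)" using coprime_cong_mult[OF c1 c2] cop12 by simp
  then have "[v = d] (mod int q)" using qs(1) by simp
  moreover have "v \<in> Dset A"
  proof -
    have "es \<noteq> []" using les bs(1) by auto
    then have "tomat (foldl stepT I4 es) \<in> semigrp A" using list_semigrp esA by blast
    moreover have "v = tomat (foldl stepT I4 es) $$ (1,1)" unfolding v_def by (rule tomat_val[symmetric])
    ultimately show ?thesis unfolding Dset_def by blast
  qed
  ultimately show "\<exists>x\<in>Dset {a. 0 < a \<and> [a = r] (mod k)}. [x = d] (mod int q)" unfolding A_def by blast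
qed

end
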